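(* Let $G$ be a graph with a 1-planar drawing $D$. If $G$ is 4-connected, then $D$ is nice.
   Context: All drawings are good (no edge crosses itself, two edges cross at most once, adjacent edges do not cross). A drawing is 1-planar if every edge is crossed at most once. If edges $ab$ and $cd$ cross in $D$, the associated edges of this crossing are the edges of $G[\{a,b,c,d\}]$ other than $ab$ and $cd$. A 1-planar drawing $D$ is nice if for every pair of crossing edges in $D$, all of their associated edges are uncrossed in $D$. A graph is 4-connected if it has no vertex-cut of fewer than 4 vertices (with $\kappa(K_n)=n-1$). *)

theory Defs
  imports "HOL-Analysis.Analysis"
begin

definition simple_graph :: "'a set \<Rightarrow> 'a set set \<Rightarrow> bool" where
  "simple_graph V E \<longleftrightarrow> finite V \<and> (\<forall>e\<in>E. \<exists>u v. e = {u, v} \<and> u \<in> V \<and> v \<in> V \<and> u \<noteq> v)"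

definition connected_on :: "'a set \<Rightarrow> 'a set set \<Rightarrow> bool" where
  "connected_on W E \<longleftrightarrow>
     (\<forall>u\<in>W. \<forall>v\<in>W. (u, v) \<in> {(x, y). x \<in> W \<and> y \<in> W \<and> {x, y} \<in> E}\<^sup>*)"

text \<open>k-connectedness: more than k vertices and no vertex cut of fewer than k vertices
  (so that the connectivity of K_n is n-1).\<close>
definition k_connected :: "nat \<Rightarrow> 'a set \<Rightarrow> 'a set set \<Rightarrow> bool" where
  "k_connected k V E \<longleftrightarrow> card V > k \<and>
     (\<forall>S. S \<subseteq> V \<and> card S < k \<longrightarrow> connected_on (V - S) E)"

definition proper_crossing_at :: "(real \<Rightarrow> complex) \<Rightarrow> (real \<Rightarrow> complex) \<Rightarrow> complex \<Rightarrow> bool" where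
  "proper_crossing_at g1 g2 x \<longleftrightarrow>
     (\<exists>U h k. open U \<and> x \<in> U \<and> homeomorphism U (ball 0 1) h k \<and> h x = 0 \<and>
        h ` (path_image g1 \<inter> U) = {z \<in> ball 0 1. Im z = 0} \<and>
        h ` (path_image g2 \<inter> U) = {z \<in> ball 0 1. Re z = 0})"

definition crossings ::
  "'a set \<Rightarrow> ('a \<Rightarrow> complex) \<Rightarrow> ('a set \<Rightarrow> real \<Rightarrow> complex) \<Rightarrow> 'a set \<Rightarrow> 'a set \<Rightarrow> complex set" where
  "crossings V pos curve e f = path_image (curve e) \<inter> path_image (curve f) - pos ` V"

definition cross ::
  "'a set \<Rightarrow> ('a \<Rightarrow> complex) \<Rightarrow> ('a set \<Rightarrow> real \<Rightarrow> complex) \<Rightarrow> 'a set \<Rightarrow> 'a set \<Rightarrow> bool" where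
  "cross V pos curve e f \<longleftrightarrow> e \<noteq> f \<and> crossings V pos curve e f \<noteq> {}"

definition drawing ::
  "'a set \<Rightarrow> 'a set set \<Rightarrow> ('a \<Rightarrow> complex) \<Rightarrow> ('a set \<Rightarrow> real \<Rightarrow> complex) \<Rightarrow> bool" where
  "drawing V E pos curve \<longleftrightarrow>
     inj_on pos V \<and>
     (\<forall>e\<in>E. arc (curve e) \<and>
        {pathstart (curve e), pathfinish (curve e)} = pos ` e \<and>
        path_image (curve e) \<inter> pos ` V \<subseteq> pos ` e \<and>
        pos ` V \<inter> (curve e) ` {0<..<1} = {}) \<and>
     (\<forall>e\<in>E. \<forall>f\<in>E. e \<noteq> f \<longrightarrow>
        (\<forall>x \<in> crossings V pos curve e f. proper_crossing_at (curve e) (curve f) x))"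

definition good_drawing ::
  "'a set \<Rightarrow> 'a set set \<Rightarrow> ('a \<Rightarrow> complex) \<Rightarrow> ('a set \<Rightarrow> real \<Rightarrow> complex) \<Rightarrow> bool" where
  "good_drawing V E pos curve \<longleftrightarrow> drawing V E pos curve \<and>
     (\<forall>e\<in>E. \<forall>f\<in>E. e \<noteq> f \<longrightarrow>
        finite (crossings V pos curve e f) \<and> card (crossings V pos curve e f) \<le> 1 \<and>
        (e \<inter> f \<noteq> {} \<longrightarrow> crossings V pos curve e f = {}))"

text \<open>1-planar: every edge is crossed at most once.  In a good drawing two edges cross at
  most once, so this says at most one other edge crosses it.\<close>
definition one_planar_drawing ::
  "'a set \<Rightarrow> 'a set set \<Rightarrow> ('a \<Rightarrow> complex) \<Rightarrow> ('a set \<Rightarrow> real \<Rightarrow> complex) \<Rightarrow> bool" where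
  "one_planar_drawing V E pos curve \<longleftrightarrow> good_drawing V E pos curve \<and>
     (\<forall>e\<in>E. card {f\<in>E. cross V pos curve e f} \<le> 1)"

definition nice_drawing ::
  "'a set \<Rightarrow> 'a set set \<Rightarrow> ('a \<Rightarrow> complex) \<Rightarrow> ('a set \<Rightarrow> real \<Rightarrow> complex) \<Rightarrow> bool" where
  "nice_drawing V E pos curve \<longleftrightarrow> one_planar_drawing V E pos curve \<and>
     (\<forall>e\<in>E. \<forall>f\<in>E. cross V pos curve e f \<longrightarrow>
        (\<forall>g\<in>E. g \<subseteq> e \<union> f \<and> g \<noteq> e \<and> g \<noteq> f \<longrightarrow>
           (\<forall>h\<in>E. \<not> cross V pos curve g h)))"

end

theory Submission
  imports Defs
begin

lemma sign_change_pos: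
  fixes f :: "real \<Rightarrow> real"
  assumes cont: "continuous_on {a..b} f" and inj: "inj_on f {a..b}"
    and "a < t0" "t0 < b" "f t0 = 0" and pa: "f a > 0" and pb: "f b > 0"
  shows False
proof -
  have c1: "continuous_on {a..t0} f" using cont assms by (auto intro: continuous_on_subset)
  have c2: "continuous_on {t0..b} f" using cont assms by (auto intro: continuous_on_subset)
  show False
  proof (cases "f a \<le> f b")
    case True
    then obtain t where t: "t0 \<le> t" "t \<le> b" "f t = f a"
      using IVT'[of f t0 "f a" b] c2 pa assms by auto
    then have "t = a" using inj_onD[OF inj, of t a] assms by auto
    then show False using t assms by auto
  next
    case False
    then obtain t where t: "a \<le> t" "t \<le> t0" "f t = f b"
      using IVT2'[of f t0 "f b" a] c1 pb assms by auto
    then have "t = b" using inj_onD[OF inj, of t b] assms by auto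
    then show False using t assms by auto
  qed
qed

lemma sign_change:
  fixes f :: "real \<Rightarrow> real"
  assumes cont: "continuous_on {a..b} f" and inj: "inj_on f {a..b}"
    and "a < t0" "t0 < b" "f t0 = 0"
  shows "f a * f b < 0"
proof -
  have na: "f a \<noteq> 0"
  proof
    assume "f a = 0" then have "a = t0" using inj_onD[OF inj, of a t0] assms by auto
    then show False using assms by auto
  qed
  have nb: "f b \<noteq> 0"
  proof
    assume "f b = 0" then have "b = t0" using inj_onD[OF inj, of b t0] assms by auto
    then show False using assms by auto
  qed
  have "\<not> (f a > 0 \<and> f b > 0)" using sign_change_pos[OF assms] by auto
  moreover have "\<not> (f a < 0 \<and> f b < 0)"
  proof
    assume "f a < 0 \<and> f b < 0"
    moreover have "continuous_on {a..b} (\<lambda>t. - f t)" using cont by (intro continuous_intros)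
    moreover have "inj_on (\<lambda>t. - f t) {a..b}" using inj by (auto simp: inj_on_def)
    ultimately show False using sign_change_pos[of a b "\<lambda>t. - f t" t0] assms by auto
  qed
  ultimately show ?thesis using na nb
    by (metis linorder_neqE_linordered_idom mult_neg_pos mult_pos_neg) 
qed

lemma homeo_small:
  fixes h k :: "complex \<Rightarrow> complex"
  assumes hom: "homeomorphism U (ball 0 1) h k" and "x \<in> U" "h x = 0" "closed K" "x \<notin> K"
  shows "\<exists>\<rho>>0. \<rho> \<le> 1 \<and> (\<forall>w\<in>ball 0 \<rho>. k w \<notin> K)"
proof -
  have kc: "continuous_on (ball 0 1) k" using hom unfolding homeomorphism_def by auto
  have k0: "k 0 = x" using hom assms unfolding homeomorphism_def by metis
  have "open (ball 0 1 \<inter> k -` (- K))"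
    using continuous_open_preimage[OF kc] assms by auto
  moreover have "0 \<in> ball 0 1 \<inter> k -` (- K)" using k0 assms by auto
  ultimately obtain e where e: "e > 0" "ball 0 e \<subseteq> ball 0 1 \<inter> k -` (- K)"
    using open_contains_ball_eq by blast
  show ?thesis
    by (rule exI[of _ "min e 1"]) (use e in auto)
qed

lemma path_near:
  fixes p :: "real \<Rightarrow> complex"
  assumes "path p" "t0 \<in> {0..1}" "p t0 \<in> Ob" "open Ob"
  shows "\<exists>\<eta>>0. \<forall>t\<in>{0..1}. \<bar>t - t0\<bar> < \<eta> \<longrightarrow> p t \<in> Ob"
proof -
  obtain e where e: "e > 0" "ball (p t0) e \<subseteq> Ob" using assms open_contains_ball_eq by blast
  have "continuous_on {0..1} p" using assms path_def by blast
  then obtain d where d: "d > 0" "\<forall>t\<in>{0..1}. dist t t0 < d \<longrightarrow> dist (p t) (p t0) < e"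
    using assms e unfolding continuous_on_iff by blast
  show ?thesis
    by (rule exI[of _ d]) (use d e in \<open>auto simp: dist_real_def dist_commute\<close>)
qed

lemma homeo_open_image:
  fixes h k :: "complex \<Rightarrow> complex"
  assumes hom: "homeomorphism U (ball 0 1) h k" and "open U" and "\<rho> \<le> 1"
  shows "k ` ball 0 \<rho> = U \<inter> h -` ball 0 \<rho>" and "open (k ` ball 0 \<rho>)"
proof -
  show eq: "k ` ball 0 \<rho> = U \<inter> h -` ball 0 \<rho>"
  proof
    show "k ` ball 0 \<rho> \<subseteq> U \<inter> h -` ball 0 \<rho>"
      using hom assms unfolding homeomorphism_def by auto
    show "U \<inter> h -` ball 0 \<rho> \<subseteq> k ` ball 0 \<rho>"
    proof
      fix z assume "z \<in> U \<inter> h -` ball 0 \<rho>"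
      then show "z \<in> k ` ball 0 \<rho>" using hom unfolding homeomorphism_def
        by (metis IntD1 IntD2 image_eqI vimageE)
    qed
  qed
  have "continuous_on U h" using hom homeomorphism_def by blast
  then show "open (k ` ball 0 \<rho>)" unfolding eq using continuous_open_preimage assms by blast
qed

lemma arc_inj: "arc g \<Longrightarrow> s \<in> {0..1} \<Longrightarrow> t \<in> {0..1} \<Longrightarrow> g s = g t \<Longrightarrow> s = t"
  unfolding arc_def by (meson inj_onD)

lemma homeo_kh: "homeomorphism U S h k \<Longrightarrow> z \<in> U \<Longrightarrow> k (h z) = z"
  unfolding homeomorphism_def by blast
lemma homeo_hk: "homeomorphism U S h k \<Longrightarrow> w \<in> S \<Longrightarrow> h (k w) = w"
  unfolding homeomorphism_def by blast
lemma homeo_kU: "homeomorphism U S h k \<Longrightarrow> w \<in> S \<Longrightarrow> k w \<in> U"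
  unfolding homeomorphism_def by blast
lemma homeo_hS: "homeomorphism U S h k \<Longrightarrow> z \<in> U \<Longrightarrow> h z \<in> S"
  unfolding homeomorphism_def by blast

lemma core_same:
  fixes \<alpha> \<gamma> \<beta> :: "real \<Rightarrow> complex"
  assumes arcs: "arc \<alpha>" "arc \<gamma>" "arc \<beta>"
   and s0: "0 < s0" "s0 < 1" and t0: "0 < t0" "t0 < 1"
   and ax: "\<alpha> s0 = x" and gx: "\<gamma> t0 = x"
   and ag: "path_image \<alpha> \<inter> path_image \<gamma> = {x}"
   and ab: "path_image \<alpha> \<inter> path_image \<beta> = {\<alpha> 0}"
   and gb: "path_image \<gamma> \<inter> path_image \<beta> = {\<gamma> 0}"
   and pc: "proper_crossing_at \<alpha> \<gamma> x"
  shows "connected_component (- (\<alpha> ` {0..s0} \<union> \<gamma> ` {0..t0} \<union> path_image \<beta>)) (\<alpha> 1) (\<gamma> 1)"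
proof -
  define C where "C = \<alpha> ` {0..s0} \<union> \<gamma> ` {0..t0} \<union> path_image \<beta>"
  obtain U h k where U: "open U" "x \<in> U" and hom: "homeomorphism U (ball 0 1) h k" and hx: "h x = 0"
    and ha: "h ` (path_image \<alpha> \<inter> U) = {z \<in> ball 0 1. Im z = 0}"
    and hg: "h ` (path_image \<gamma> \<inter> U) = {z \<in> ball 0 1. Re z = 0}"
    using pc unfolding proper_crossing_at_def by blast
  have xb: "x \<notin> path_image \<beta>"
  proof
    assume "x \<in> path_image \<beta>"
    then have "x \<in> path_image \<alpha> \<inter> path_image \<beta>" using ax s0 by (auto simp: path_image_def)
    then have "\<alpha> s0 = \<alpha> 0" using ab ax by auto
    then show False using arc_inj[OF arcs(1), of s0 0] s0 by auto
  qed
  obtain \<rho> where rho: "\<rho> > 0" "\<rho> \<le> 1" "\<forall>w\<in>ball 0 \<rho>. k w \<notin> path_image \<beta>"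
    using homeo_small[OF hom U(2) hx _ xb] arcs(3) closed_path_image arc_imp_path by blast
  define W where "W = U \<inter> h -` ball 0 \<rho>"
  have oW: "open W" using homeo_open_image[OF hom U(1) rho(2)] W_def by auto
  have xW: "x \<in> W" using W_def U hx rho by auto
  obtain e1 where e1: "e1 > 0" "\<forall>t\<in>{0..1}. \<bar>t - s0\<bar> < e1 \<longrightarrow> \<alpha> t \<in> W"
    using path_near[of \<alpha> s0 W] arcs arc_imp_path ax xW oW s0 by auto
  obtain e2 where e2: "e2 > 0" "\<forall>t\<in>{0..1}. \<bar>t - t0\<bar> < e2 \<longrightarrow> \<gamma> t \<in> W"
    using path_near[of \<gamma> t0 W] arcs arc_imp_path gx xW oW t0 by auto
  define s1 where "s1 = min (s0 + e1/2) ((s0+1)/2)"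
  define t1 where "t1 = min (t0 + e2/2) ((t0+1)/2)"
  have s1a: "s0 < s1" "s1 < 1" "\<bar>s1 - s0\<bar> < e1" using s1_def e1 s0 by (auto simp: min_def)
  have s1: "s0 < s1" "s1 < 1" "\<alpha> s1 \<in> W" using s1a e1 s0 by auto
  have t1a: "t0 < t1" "t1 < 1" "\<bar>t1 - t0\<bar> < e2" using t1_def e2 t0 by (auto simp: min_def)
  have t1: "t0 < t1" "t1 < 1" "\<gamma> t1 \<in> W" using t1a e2 t0 by auto
  define z1 where "z1 = h (\<alpha> s1)"
  define z2 where "z2 = h (\<gamma> t1)"
  have as1U: "\<alpha> s1 \<in> U" and gt1U: "\<gamma> t1 \<in> U" using s1 t1 W_def by auto
  have z1b: "z1 \<in> ball 0 \<rho>" and z2b: "z2 \<in> ball 0 \<rho>" using s1 t1 W_def z1_def z2_def by auto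
  have "\<alpha> s1 \<in> path_image \<alpha>" using s1 s0 by (auto simp: path_image_def)
  then have "z1 \<in> {z \<in> ball 0 1. Im z = 0}" using ha as1U z1_def by blast
  then have z1r: "Im z1 = 0" by auto
  have "\<gamma> t1 \<in> path_image \<gamma>" using t1 t0 by (auto simp: path_image_def)
  then have "z2 \<in> {z \<in> ball 0 1. Re z = 0}" using hg gt1U z2_def by blast
  then have z2i: "Re z2 = 0" by auto
  have kz1: "k z1 = \<alpha> s1" using homeo_kh[OF hom as1U] z1_def by simp
  have kz2: "k z2 = \<gamma> t1" using homeo_kh[OF hom gt1U] z2_def by simp
  have k0: "k 0 = x" using homeo_kh[OF hom U(2)] hx by simp
  have z1n: "z1 \<noteq> 0"
  proof
    assume "z1 = 0" then have "\<alpha> s1 = \<alpha> s0" using kz1 k0 ax by simp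
    then show False using arc_inj[OF arcs(1), of s1 s0] s1 s0 by auto
  qed
  have z2n: "z2 \<noteq> 0"
  proof
    assume "z2 = 0" then have "\<gamma> t1 = \<gamma> t0" using kz2 k0 gx by simp
    then show False using arc_inj[OF arcs(2), of t1 t0] t1 t0 by auto
  qed
  have A: "\<alpha> t \<notin> C" if t: "t \<in> {s1..1}" for t
  proof
    assume "\<alpha> t \<in> C"
    then consider "\<alpha> t \<in> \<alpha> ` {0..s0}" | "\<alpha> t \<in> \<gamma> ` {0..t0}" | "\<alpha> t \<in> path_image \<beta>"
      unfolding C_def by blast
    then show False
    proof cases
      case 1 then obtain t' where "t' \<in> {0..s0}" "\<alpha> t = \<alpha> t'" by auto
      then show False using arc_inj[OF arcs(1), of t t'] t s1 s0 by auto
    next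
      case 2
      then have "\<alpha> t \<in> path_image \<gamma>" using t0 by (auto simp: path_image_def)
      moreover have "\<alpha> t \<in> path_image \<alpha>" using t s1 s0 by (auto simp: path_image_def)
      ultimately have "\<alpha> t = \<alpha> s0" using ag ax by auto
      then show False using arc_inj[OF arcs(1), of t s0] t s1 s0 by auto
    next
      case 3
      moreover have "\<alpha> t \<in> path_image \<alpha>" using t s1 s0 by (auto simp: path_image_def)
      ultimately have "\<alpha> t = \<alpha> 0" using ab by auto
      then show False using arc_inj[OF arcs(1), of t 0] t s1 s0 by auto
    qed
  qed
  have G: "\<gamma> t \<notin> C" if t: "t \<in> {t1..1}" for t
  proof
    assume "\<gamma> t \<in> C"
    then consider "\<gamma> t \<in> \<alpha> ` {0..s0}" | "\<gamma> t \<in> \<gamma> ` {0..t0}" | "\<gamma> t \<in> path_image \<beta>"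
      unfolding C_def by blast
    then show False
    proof cases
      case 2 then obtain t' where "t' \<in> {0..t0}" "\<gamma> t = \<gamma> t'" by auto
      then show False using arc_inj[OF arcs(2), of t t'] t t1 t0 by auto
    next
      case 1
      then have "\<gamma> t \<in> path_image \<alpha>" using s0 by (auto simp: path_image_def)
      moreover have "\<gamma> t \<in> path_image \<gamma>" using t t1 t0 by (auto simp: path_image_def)
      ultimately have "\<gamma> t = \<gamma> t0" using ag gx by auto
      then show False using arc_inj[OF arcs(2), of t t0] t t1 t0 by auto
    next
      case 3
      moreover have "\<gamma> t \<in> path_image \<gamma>" using t t1 t0 by (auto simp: path_image_def)
      ultimately have "\<gamma> t = \<gamma> 0" using gb by auto
      then show False using arc_inj[OF arcs(2), of t 0] t t1 t0 by auto
    qed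
  qed
  have segb: "closed_segment z1 z2 \<subseteq> ball 0 \<rho>"
    using z1b z2b convex_ball convex_contains_segment by blast
  have S: "k w \<notin> C" if w: "w \<in> closed_segment z1 z2" for w
  proof (cases "w = z1 \<or> w = z2")
    case True then show ?thesis using A G kz1 kz2 s1 t1 by auto
  next
    case False
    obtain u where u: "0 \<le> u" "u \<le> 1" "w = (1 - u) *\<^sub>R z1 + u *\<^sub>R z2"
      using w unfolding closed_segment_def by blast
    have "u \<noteq> 0" "u \<noteq> 1" using u False by auto
    then have u': "0 < u" "u < 1" using u by auto
    have "Re z1 \<noteq> 0" using z1n z1r complex_eq_iff by auto
    then have reW: "Re w \<noteq> 0" using u u' z2i by simp
    have "Im z2 \<noteq> 0" using z2n z2i complex_eq_iff by auto
    then have imW: "Im w \<noteq> 0" using u u' z1r by simp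
    have wb: "w \<in> ball 0 \<rho>" using segb w by auto
    have wb1: "w \<in> ball 0 1" using wb rho by auto
    have kwU: "k w \<in> U" and hkw: "h (k w) = w" using homeo_kU[OF hom wb1] homeo_hk[OF hom wb1] by auto
    show ?thesis
    proof
      assume "k w \<in> C"
      then consider "k w \<in> path_image \<alpha>" | "k w \<in> path_image \<gamma>" | "k w \<in> path_image \<beta>"
        unfolding C_def path_image_def using s0 t0 by force
      then show False
      proof cases
        case 1
        then have "w \<in> h ` (path_image \<alpha> \<inter> U)" using kwU hkw by force
        then show False using ha imW by auto
      next
        case 2
        then have "w \<in> h ` (path_image \<gamma> \<inter> U)" using kwU hkw by force
        then show False using hg reW by auto
      next
        case 3 then show False using rho wb by auto
      qed
    qed
  qed
  define T where "T = \<alpha> ` {s1..1} \<union> k ` closed_segment z1 z2 \<union> \<gamma> ` {t1..1}"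
  have "continuous_on {0..1} \<alpha>" using arcs(1) arc_imp_path path_def by blast
  then have "continuous_on {s1..1} \<alpha>" by (rule continuous_on_subset) (use s1 s0 in auto)
  then have c1: "connected (\<alpha> ` {s1..1})" by (intro connected_continuous_image) auto
  have "continuous_on {0..1} \<gamma>" using arcs(2) arc_imp_path path_def by blast
  then have "continuous_on {t1..1} \<gamma>" by (rule continuous_on_subset) (use t1 t0 in auto)
  then have c3: "connected (\<gamma> ` {t1..1})" by (intro connected_continuous_image) auto
  have kc: "continuous_on (ball 0 1) k" using hom homeomorphism_def by blast
  have c2: "connected (k ` closed_segment z1 z2)"
    using segb rho by (intro connected_continuous_image connected_segment continuous_on_subset[OF kc]) auto
  have "connected T"
  proof -
    have "connected (\<alpha> ` {s1..1} \<union> k ` closed_segment z1 z2)"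
      using c1 c2 kz1 s1 by (rule_tac connected_Un) force+
    moreover have "\<gamma> t1 \<in> k ` closed_segment z1 z2" using kz2 by force
    ultimately show ?thesis unfolding T_def using c3 t1 by (rule_tac connected_Un) force+
  qed
  moreover have "T \<subseteq> - C" using A G S unfolding T_def by blast
  moreover have "\<alpha> 1 \<in> T" "\<gamma> 1 \<in> T" using s1 t1 unfolding T_def by auto
  ultimately show ?thesis unfolding C_def[symmetric] by (rule connected_componentI)
qed

lemma core_sep:
  fixes \<alpha> \<gamma> \<beta> \<delta> :: "real \<Rightarrow> complex"
  assumes arcs: "arc \<alpha>" "arc \<gamma>" "arc \<beta>" "arc \<delta>"
   and s0: "0 < s0" "s0 < 1" and t0: "0 < t0" "t0 < 1"
   and ax: "\<alpha> s0 = x" and gx: "\<gamma> t0 = x"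
   and ag: "path_image \<alpha> \<inter> path_image \<gamma> = {x}"
   and ab: "path_image \<alpha> \<inter> path_image \<beta> = {\<alpha> 0}"
   and gb: "path_image \<gamma> \<inter> path_image \<beta> = {\<gamma> 0}"
   and bs: "\<beta> 0 = \<alpha> 0" "\<beta> 1 = \<gamma> 0"
   and pd: "proper_crossing_at \<beta> \<delta> y"
   and dC: "path_image \<delta> \<inter> (\<alpha> ` {0..s0} \<union> \<gamma> ` {0..t0} \<union> path_image \<beta>) = {y}"
   and yb: "y \<in> path_image \<beta>" "y \<noteq> \<beta> 0" "y \<noteq> \<beta> 1"
   and yd: "y \<noteq> \<delta> 0" "y \<noteq> \<delta> 1"
  shows "\<not> connected_component (- (\<alpha> ` {0..s0} \<union> \<gamma> ` {0..t0} \<union> path_image \<beta>)) (\<delta> 0) (\<delta> 1)"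
proof
  define C where "C = \<alpha> ` {0..s0} \<union> \<gamma> ` {0..t0} \<union> path_image \<beta>"
  assume "connected_component (- (\<alpha> ` {0..s0} \<union> \<gamma> ` {0..t0} \<union> path_image \<beta>)) (\<delta> 0) (\<delta> 1)"
  then obtain S where S: "connected S" "S \<subseteq> - C" "\<delta> 0 \<in> S" "\<delta> 1 \<in> S"
    unfolding connected_component_def C_def by blast
  define p1 where "p1 = subpath 0 s0 \<alpha>"
  define p2 where "p2 = subpath t0 0 \<gamma>"
  define p3 where "p3 = reversepath \<beta>"
  have ip1: "path_image p1 = \<alpha> ` {0..s0}" using p1_def s0 by (simp add: path_image_subpath)
  have ip2: "path_image p2 = \<gamma> ` {0..t0}" using p2_def t0 by (simp add: path_image_subpath)
  have ip3: "path_image p3 = path_image \<beta>" using p3_def by simp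
  have pa: "path_image \<alpha> = \<alpha> ` {0..1}" "path_image \<gamma> = \<gamma> ` {0..1}" by (auto simp: path_image_def)
  have sub1: "\<alpha> ` {0..s0} \<subseteq> path_image \<alpha>" using s0 pa by auto
  have sub2: "\<gamma> ` {0..t0} \<subseteq> path_image \<gamma>" using t0 pa by auto
  have arc1: "arc p1" unfolding p1_def using arcs s0 by (intro arc_subpath_arc) auto
  have arc2: "arc p2" unfolding p2_def using arcs t0 by (intro arc_subpath_arc) auto
  have arc3: "arc p3" unfolding p3_def using arcs by (simp add: arc_reversepath)
  have sp: "simple_path (p1 +++ p2 +++ p3)"
  proof (rule simple_path_join3I[OF arc1 arc2 arc3])
    show "path_image p1 \<inter> path_image p2 \<subseteq> {pathstart p2}"
    proof -
      have "path_image p1 \<inter> path_image p2 \<subseteq> path_image \<alpha> \<inter> path_image \<gamma>"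
        using ip1 ip2 sub1 sub2 by blast
      moreover have "pathstart p2 = x" using p2_def gx by simp
      ultimately show ?thesis using ag by simp
    qed
    show "path_image p2 \<inter> path_image p3 \<subseteq> {pathstart p3}"
    proof -
      have "path_image p2 \<inter> path_image p3 \<subseteq> path_image \<gamma> \<inter> path_image \<beta>"
        using ip2 ip3 sub2 by blast
      moreover have "pathstart p3 = \<gamma> 0" using p3_def bs by (simp add: pathfinish_def)
      ultimately show ?thesis using gb by simp
    qed
    show "path_image p1 \<inter> path_image p3 \<subseteq> {pathstart p1} \<inter> {pathfinish p3}"
    proof -
      have "path_image p1 \<inter> path_image p3 \<subseteq> path_image \<alpha> \<inter> path_image \<beta>"
        using ip1 ip3 sub1 by blast
      moreover have "pathstart p1 = \<alpha> 0" using p1_def by simp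
      moreover have "pathfinish p3 = \<alpha> 0" using p3_def bs by (simp add: pathstart_def)
      ultimately show ?thesis using ab by simp
    qed
    show "pathfinish p1 = pathstart p2" using p1_def p2_def ax gx by simp
    show "pathfinish p2 = pathstart p3" unfolding p2_def p3_def pathstart_reversepath
      using bs by (simp add: pathfinish_def subpath_def)
  qed
  have loop: "pathfinish (p1 +++ p2 +++ p3) = pathstart (p1 +++ p2 +++ p3)"
  proof -
    have "pathfinish p3 = \<alpha> 0" using p3_def bs by (simp add: pathstart_def)
    moreover have "pathstart p1 = \<alpha> 0" using p1_def by simp
    ultimately show ?thesis by simp
  qed
  have imc: "path_image (p1 +++ p2 +++ p3) = C"
  proof -
    have "pathfinish p1 = pathstart p2" using p1_def p2_def ax gx by simp
    moreover have "pathfinish p2 = pathstart (p3)" unfolding p2_def p3_def pathstart_reversepath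
      using bs by (simp add: pathfinish_def subpath_def)
    ultimately show ?thesis using ip1 ip2 ip3 C_def by (simp add: path_image_join Un_assoc)
  qed
  define I where "I = inside C"
  define Ou where "Ou = outside C"
  have J: "open I" "open Ou" "I \<inter> Ou = {}" "I \<union> Ou = - C" "frontier I = C" "frontier Ou = C"
    using Jordan_inside_outside[OF sp loop] imc I_def Ou_def by auto
  obtain U h k where U: "open U" "y \<in> U" and hom: "homeomorphism U (ball 0 1) h k" and hy: "h y = 0"
    and hb: "h ` (path_image \<beta> \<inter> U) = {z \<in> ball 0 1. Im z = 0}"
    and hd: "h ` (path_image \<delta> \<inter> U) = {z \<in> ball 0 1. Re z = 0}"
    using pd unfolding proper_crossing_at_def by blast
  define K where "K = \<alpha> ` {0..s0} \<union> \<gamma> ` {0..t0}"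
  have cK: "closed K"
  proof -
    have c1: "continuous_on {0..1} \<alpha>" "continuous_on {0..1} \<gamma>"
      using arcs arc_imp_path path_def by blast+
    have "compact (\<alpha> ` {0..s0})"
      by (intro compact_continuous_image continuous_on_subset[OF c1(1)]) (use s0 in auto)
    moreover have "compact (\<gamma> ` {0..t0})"
      by (intro compact_continuous_image continuous_on_subset[OF c1(2)]) (use t0 in auto)
    ultimately show ?thesis unfolding K_def by (intro compact_imp_closed compact_Un)
  qed
  have yK: "y \<notin> K"
  proof
    assume "y \<in> K"
    then consider "y \<in> path_image \<alpha>" | "y \<in> path_image \<gamma>" using sub1 sub2 K_def by blast
    then show False
    proof cases
      case 1 then have "y = \<alpha> 0" using ab yb by auto
      then show False using yb bs by auto
    next
      case 2 then have "y = \<gamma> 0" using gb yb by auto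
      then show False using yb bs by auto
    qed
  qed
  obtain \<rho> where rho: "\<rho> > 0" "\<rho> \<le> 1" "\<forall>w\<in>ball 0 \<rho>. k w \<notin> K"
    using homeo_small[OF hom U(2) hy cK yK] by blast
  define W where "W = U \<inter> h -` ball 0 \<rho>"
  have oW: "open W" using homeo_open_image[OF hom U(1) rho(2)] W_def by auto
  have yW: "y \<in> W" using W_def U hy rho by auto
  have kb: "continuous_on (ball 0 1) k" using hom homeomorphism_def by blast
  have hc: "continuous_on U h" using hom homeomorphism_def by blast
  define Hp where "Hp = k ` {w \<in> ball 0 \<rho>. Im w > 0}"
  define Hm where "Hm = k ` {w \<in> ball 0 \<rho>. Im w < 0}"
  have cHp: "connected Hp"
  proof -
    have "convex {w \<in> ball 0 \<rho>. Im w > 0}"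
      using convex_Int[OF convex_ball convex_halfspace_Im_gt, of 0 \<rho> 0] by (simp add: Int_def)
    then show ?thesis unfolding Hp_def using rho
      by (intro connected_continuous_image convex_connected continuous_on_subset[OF kb]) auto
  qed
  have cHm: "connected Hm"
  proof -
    have "convex {w \<in> ball 0 \<rho>. Im w < 0}"
      using convex_Int[OF convex_ball convex_halfspace_Im_lt, of 0 \<rho> 0] by (simp add: Int_def)
    then show ?thesis unfolding Hm_def using rho
      by (intro connected_continuous_image convex_connected continuous_on_subset[OF kb]) auto
  qed
  have offC: "k w \<notin> C" if "w \<in> ball 0 \<rho>" "Im w \<noteq> 0" for w
  proof
    assume kC: "k w \<in> C"
    have wb1: "w \<in> ball 0 1" using that rho by auto
    have kwU: "k w \<in> U" and hkw: "h (k w) = w" using homeo_kU[OF hom wb1] homeo_hk[OF hom wb1] by auto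
    have "k w \<notin> K" using rho that by auto
    then have "k w \<in> path_image \<beta>" using kC C_def K_def by auto
    then have "w \<in> h ` (path_image \<beta> \<inter> U)" using kwU hkw by force
    then show False using hb that by auto
  qed
  have HC: "Hp \<union> Hm \<subseteq> - C" using offC Hp_def Hm_def by force
  have key: "X \<inter> (Hp \<union> Hm) \<noteq> {}" if X: "open X" "y \<in> closure X" "X \<subseteq> - C" for X
  proof -
    have "W \<inter> X \<noteq> {}" using open_Int_closure_eq_empty[OF oW, of X] X yW by auto
    then obtain z where z: "z \<in> W" "z \<in> X" by auto
    define w where "w = h z"
    have zU: "z \<in> U" and wb: "w \<in> ball 0 \<rho>" using z W_def w_def by auto
    have kw: "k w = z" using homeo_kh[OF hom zU] w_def by simp
    have "Im w \<noteq> 0"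
    proof
      assume "Im w = 0"
      then have "w \<in> h ` (path_image \<beta> \<inter> U)" using hb wb rho by auto
      then obtain z' where "z' \<in> path_image \<beta>" "z' \<in> U" "h z' = w" by auto
      then have "z' = z" using homeo_kh[OF hom] kw by metis
      then show False using \<open>z' \<in> path_image \<beta>\<close> z X C_def by auto
    qed
    then have "z \<in> Hp \<union> Hm" using kw wb Hp_def Hm_def by (cases "Im w > 0") force+
    then show ?thesis using z by auto
  qed
  have "y \<in> path_image \<delta>" using dC by blast
  then obtain t2 where t2: "t2 \<in> {0..1}" "\<delta> t2 = y" by (auto simp: path_image_def)
  have t2': "0 < t2" "t2 < 1" using t2 yd by (auto simp: less_eq_real_def)
  obtain e where e: "e > 0" "\<forall>t\<in>{0..1}. \<bar>t - t2\<bar> < e \<longrightarrow> \<delta> t \<in> W"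
    using path_near[of \<delta> t2 W] arcs arc_imp_path t2 yW oW by auto
  define e' where "e' = min (e/2) (min (t2/2) ((1-t2)/2))"
  have ee: "e' \<le> e/2" "e' \<le> t2/2" "e' \<le> (1-t2)/2" unfolding e'_def by linarith+
  have e'0: "0 < e'" using e'_def e t2' by auto
  have e'1: "e' < e" using ee(1) e by linarith
  have e'2: "e' < t2" using ee(2) t2' e'0 by linarith
  have e'3: "t2 + e' < 1" using ee(3) t2' by (simp add: field_simps)
  note e' = e'0 e'1 e'2 e'3
  define a where "a = t2 - e'"
  define b where "b = t2 + e'"
  have ab': "0 < a" "a < t2" "t2 < b" "b < 1" using e' a_def b_def by auto
  have inW: "\<delta> t \<in> W" if "t \<in> {a..b}" for t
    using e that ab' e' a_def b_def by auto
  define f where "f t = Im (h (\<delta> t))" for t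
  have reh: "Re (h (\<delta> t)) = 0" if "t \<in> {a..b}" for t
  proof -
    have "\<delta> t \<in> U" using inW[OF that] W_def by auto
    moreover have "\<delta> t \<in> path_image \<delta>" using that ab' by (auto simp: path_image_def)
    ultimately have "h (\<delta> t) \<in> h ` (path_image \<delta> \<inter> U)" by auto
    then show ?thesis using hd by auto
  qed
  have fc: "continuous_on {a..b} f"
  proof -
    have "continuous_on {0..1} \<delta>" using arcs(4) arc_imp_path path_def by blast
    then have "continuous_on {a..b} \<delta>" by (rule continuous_on_subset) (use ab' in auto)
    moreover have "\<delta> ` {a..b} \<subseteq> U" using inW W_def by auto
    ultimately have "continuous_on {a..b} (\<lambda>t. h (\<delta> t))" by (rule continuous_on_compose2[OF hc])
    then show ?thesis unfolding f_def by (intro continuous_intros)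
  qed
  have fi: "inj_on f {a..b}"
  proof (rule inj_onI)
    fix t t' assume tt: "t \<in> {a..b}" "t' \<in> {a..b}" "f t = f t'"
    have "h (\<delta> t) = h (\<delta> t')" using reh[OF tt(1)] reh[OF tt(2)] tt(3) f_def complex_eqI by metis
    moreover have "\<delta> t \<in> U" "\<delta> t' \<in> U" using inW tt W_def by auto
    ultimately have "\<delta> t = \<delta> t'" using homeo_kh[OF hom] by metis
    then show "t = t'" using arc_inj[OF arcs(4)] tt ab' by auto
  qed
  have "f t2 = 0" using f_def t2 hy by simp
  then have fab: "f a * f b < 0" using sign_change[OF fc fi] ab' by auto
  have inH: "\<delta> t \<in> (if f t > 0 then Hp else Hm)" if "t \<in> {a..b}" "f t \<noteq> 0" for t
  proof -
    have "\<delta> t \<in> U" "h (\<delta> t) \<in> ball 0 \<rho>" using inW[OF that(1)] W_def by auto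
    moreover have "k (h (\<delta> t)) = \<delta> t" using homeo_kh[OF hom] \<open>\<delta> t \<in> U\<close> by metis
    ultimately show ?thesis using that f_def Hp_def Hm_def by (cases "f t > 0") force+
  qed
  have offd: "\<delta> t \<notin> C" if "t \<in> {0..1}" "t \<noteq> t2" for t
  proof
    assume "\<delta> t \<in> C"
    moreover have "\<delta> t \<in> path_image \<delta>" using that by (auto simp: path_image_def)
    ultimately have "\<delta> t \<in> path_image \<delta> \<inter> C" by blast
    then have "\<delta> t = \<delta> t2" using dC t2 C_def by blast
    then show False using arc_inj[OF arcs(4)] that t2 by auto
  qed
  have dcont: "continuous_on {0..1} \<delta>" using arcs(4) arc_imp_path path_def by blast
  have cD1: "connected (\<delta> ` {0..a})"
    by (intro connected_continuous_image continuous_on_subset[OF dcont]) (use ab' in auto)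
  have cD2: "connected (\<delta> ` {b..1})"
    by (intro connected_continuous_image continuous_on_subset[OF dcont]) (use ab' in auto)
  define A where "A = S \<union> \<delta> ` {0..a} \<union> \<delta> ` {b..1}"
  have cA: "connected A"
  proof -
    have "connected (S \<union> \<delta> ` {0..a})" using S cD1 ab' by (rule_tac connected_Un) force+
    then show ?thesis unfolding A_def using S cD2 ab' by (rule_tac connected_Un) force+
  qed
  have AC: "A \<subseteq> - C" using S offd ab' A_def by force
  have aA: "\<delta> a \<in> A" and bA: "\<delta> b \<in> A" using A_def ab' by auto
  have "f a \<noteq> 0" "f b \<noteq> 0" using fab by auto
  then have da: "\<delta> a \<in> (if f a > 0 then Hp else Hm)" and db: "\<delta> b \<in> (if f b > 0 then Hp else Hm)"
    using inH ab' by auto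
  have "Hp \<inter> A \<noteq> {} \<and> Hm \<inter> A \<noteq> {}"
  proof -
    have "(0 < f a \<and> f b < 0) \<or> (f a < 0 \<and> 0 < f b)" using fab by (simp add: mult_less_0_iff)
    then show ?thesis
    proof
      assume "0 < f a \<and> f b < 0" then show ?thesis using da db aA bA by auto
    next
      assume "f a < 0 \<and> 0 < f b" then show ?thesis using da db aA bA by auto
    qed
  qed
  then have n1: "A \<inter> Hp \<noteq> {}" and n2: "Hm \<inter> A \<noteq> {}" by blast+
  have cAH: "connected (A \<union> Hp)" by (rule connected_Un[OF cA cHp n1])
  have "(A \<union> Hp) \<inter> Hm \<noteq> {}" using n2 by blast
  then have cZ: "connected (A \<union> Hp \<union> Hm)" by (rule connected_Un[OF cAH cHm])
  have ZC: "A \<union> Hp \<union> Hm \<subseteq> I \<union> Ou" using AC HC J(4) by blast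
  have disj: "I \<inter> (A \<union> Hp \<union> Hm) = {} \<or> Ou \<inter> (A \<union> Hp \<union> Hm) = {}"
  proof (rule connectedD[OF cZ J(1) J(2)])
    show "I \<inter> Ou \<inter> (A \<union> Hp \<union> Hm) = {}" using J(3) by blast
    show "A \<union> Hp \<union> Hm \<subseteq> I \<union> Ou" by (rule ZC)
  qed
  have yC: "y \<in> C" using C_def yb by blast
  have cI: "y \<in> closure I" using J(5) yC unfolding frontier_def by blast
  have cO: "y \<in> closure Ou" using J(6) yC unfolding frontier_def by blast
  have IC: "I \<subseteq> - C" and OC: "Ou \<subseteq> - C" using J(4) by blast+
  have k1: "I \<inter> (Hp \<union> Hm) \<noteq> {}" by (rule key[OF J(1) cI IC])
  have k2: "Ou \<inter> (Hp \<union> Hm) \<noteq> {}" by (rule key[OF J(2) cO OC])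
  show False using disj k1 k2 by blast
qed

lemma cross_sym: "cross V pos curve e f = cross V pos curve f e"
  unfolding cross_def crossings_def by (auto simp: Int_commute)

lemma pc_cong:
  "path_image p = path_image p' \<Longrightarrow> path_image q = path_image q' \<Longrightarrow>
   proper_crossing_at p q x \<Longrightarrow> proper_crossing_at p' q' x"
  unfolding proper_crossing_at_def by simp

lemma orient:
  fixes g :: "real \<Rightarrow> complex"
  assumes "arc g" "{pathstart g, pathfinish g} = {P, Q}" "P \<noteq> Q"
  shows "\<exists>g'. arc g' \<and> path_image g' = path_image g \<and> g' 0 = P \<and> g' 1 = Q"
proof (cases "pathstart g = P")
  case True
  then have "pathfinish g = Q" using assms by (auto simp: doubleton_eq_iff)
  then show ?thesis using True assms by (intro exI[of _ g]) (auto simp: pathstart_def pathfinish_def)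
next
  case False
  then have "pathstart g = Q" "pathfinish g = P" using assms by (auto simp: doubleton_eq_iff)
  then have r: "reversepath g 0 = P" "reversepath g 1 = Q"
    by (simp_all add: reversepath_def pathstart_def pathfinish_def)
  have "arc (reversepath g)" using assms(1) by (rule arc_reversepath)
  then show ?thesis using r by (intro exI[of _ "reversepath g"]) simp
qed


lemma op_card: "one_planar_drawing V E pos curve \<Longrightarrow> e \<in> E \<Longrightarrow> card {f\<in>E. cross V pos curve e f} \<le> 1"
  unfolding one_planar_drawing_def by simp
lemma dr_inj: "drawing V E pos curve \<Longrightarrow> inj_on pos V"
  unfolding drawing_def by simp
lemma dr_arc: "drawing V E pos curve \<Longrightarrow> e \<in> E \<Longrightarrow> arc (curve e)"
  unfolding drawing_def by simp
lemma dr_ends: "drawing V E pos curve \<Longrightarrow> e \<in> E \<Longrightarrow> {pathstart (curve e), pathfinish (curve e)} = pos ` e"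
  unfolding drawing_def by simp
lemma dr_PI: "drawing V E pos curve \<Longrightarrow> e \<in> E \<Longrightarrow> z \<in> path_image (curve e) \<Longrightarrow> z \<in> pos ` V \<Longrightarrow> z \<in> pos ` e"
  unfolding drawing_def by blast
lemma dr_PCR: "drawing V E pos curve \<Longrightarrow> e \<in> E \<Longrightarrow> f \<in> E \<Longrightarrow> e \<noteq> f \<Longrightarrow>
   z \<in> crossings V pos curve e f \<Longrightarrow> proper_crossing_at (curve e) (curve f) z"
  unfolding drawing_def by blast
lemma gd_disj: "good_drawing V E pos curve \<Longrightarrow> e \<in> E \<Longrightarrow> f \<in> E \<Longrightarrow> cross V pos curve e f \<Longrightarrow> e \<inter> f = {}"
  unfolding good_drawing_def cross_def by blast
lemma gd_fin: "good_drawing V E pos curve \<Longrightarrow> e \<in> E \<Longrightarrow> f \<in> E \<Longrightarrow> e \<noteq> f \<Longrightarrow>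
   finite (crossings V pos curve e f) \<and> card (crossings V pos curve e f) \<le> 1"
  unfolding good_drawing_def by blast

lemma main:
  fixes V :: "'a set" and E :: "'a set set"
    and pos :: "'a \<Rightarrow> complex" and curve :: "'a set \<Rightarrow> real \<Rightarrow> complex"
  assumes sg: "simple_graph V E" and op: "one_planar_drawing V E pos curve"
    and kc: "k_connected 4 V E"
    and Eab: "{a,b} \<in> E" and Ecd: "{c,d} \<in> E" and Eac: "{a,c} \<in> E" and Eq: "q \<in> E"
    and cr1: "cross V pos curve {a,b} {c,d}" and cr2: "cross V pos curve {a,c} q"
  shows False
proof -
  have gd: "good_drawing V E pos curve" using op unfolding one_planar_drawing_def by (rule conjunct1)
  have dr: "drawing V E pos curve" using gd unfolding good_drawing_def by (rule conjunct1)
  have injp: "inj_on pos V" using dr by (rule dr_inj)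
  have edge: "\<exists>u v. e = {u, v} \<and> u \<in> V \<and> v \<in> V \<and> u \<noteq> v" if "e \<in> E" for e
    using sg that unfolding simple_graph_def by blast
  have finV: "finite V" using sg unfolding simple_graph_def by (rule conjunct1)
  have "E \<subseteq> Pow V" using edge by blast
  moreover have "finite (Pow V)" using finV by simp
  ultimately have finE: "finite E" by (rule finite_subset)
  have uniq: "f1 = f2" if "e \<in> E" "f1 \<in> E" "f2 \<in> E" "cross V pos curve e f1" "cross V pos curve e f2"
    for e f1 f2
  proof -
    have "card {f\<in>E. cross V pos curve e f} \<le> 1" using op_card[OF op that(1)] .
    moreover have "finite {f\<in>E. cross V pos curve e f}" using finE by auto
    ultimately have "\<forall>z1\<in>{f\<in>E. cross V pos curve e f}. \<forall>z2\<in>{f\<in>E. cross V pos curve e f}. z1 = z2"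
      using card_le_Suc0_iff_eq by (metis One_nat_def)
    then show ?thesis using that by blast
  qed
  have eV: "e \<subseteq> V" if "e \<in> E" for e using edge[OF that] by auto
  have disj: "e \<inter> f = {}" if "e \<in> E" "f \<in> E" "cross V pos curve e f" for e f
    using gd_disj[OF gd] that by blast
  have arcE: "arc (curve e)" if "e \<in> E" for e using dr_arc[OF dr that] .
  have ends: "{pathstart (curve e), pathfinish (curve e)} = pos ` e" if "e \<in> E" for e
    using dr_ends[OF dr that] .
  have PI: "z \<in> pos ` e" if "e \<in> E" "z \<in> path_image (curve e)" "z \<in> pos ` V" for e z
    using dr_PI[OF dr that] .
  have CR: "cross V pos curve e f" if "e \<in> E" "f \<in> E" "e \<noteq> f" "z \<in> path_image (curve e)"
    "z \<in> path_image (curve f)" "z \<notin> pos ` V" for e f z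
    using that unfolding cross_def crossings_def by blast
  have PCR: "proper_crossing_at (curve e) (curve f) z" if "e \<in> E" "f \<in> E" "e \<noteq> f"
    "z \<in> crossings V pos curve e f" for e f z
    using dr_PCR[OF dr that] .
  have single: "\<exists>z. crossings V pos curve e f = {z}" if "e \<in> E" "f \<in> E" "cross V pos curve e f" for e f
  proof -
    have "finite (crossings V pos curve e f)" "card (crossings V pos curve e f) \<le> 1"
      "crossings V pos curve e f \<noteq> {}" "e \<noteq> f"
      using gd_fin[OF gd that(1,2)] that(3) unfolding cross_def by auto
    then obtain z where z: "z \<in> crossings V pos curve e f" by blast
    have "\<forall>z1\<in>crossings V pos curve e f. \<forall>z2\<in>crossings V pos curve e f. z1 = z2"
      using card_le_Suc0_iff_eq \<open>finite (crossings V pos curve e f)\<close>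
        \<open>card (crossings V pos curve e f) \<le> 1\<close> by (metis One_nat_def)
    then show ?thesis using z by blast
  qed
  obtain ua va where "{a,b} = {ua,va}" "ua \<noteq> va" using edge[OF Eab] by blast
  then have ab_ne: "a \<noteq> b" by auto
  obtain uc vc where "{c,d} = {uc,vc}" "uc \<noteq> vc" using edge[OF Ecd] by blast
  then have cd_ne: "c \<noteq> d" by auto
  have V4: "a \<in> V" "b \<in> V" "c \<in> V" "d \<in> V" using eV Eab Ecd by auto
  have d1: "{a,b} \<inter> {c,d} = {}" using disj Eab Ecd cr1 by blast
  have d2: "{a,c} \<inter> q = {}" using disj Eac Eq cr2 by blast
  obtain u v where q: "q = {u,v}" "u \<in> V" "v \<in> V" "u \<noteq> v" using edge[OF Eq] by blast
  have ne: "a \<noteq> c" "a \<noteq> d" "b \<noteq> c" "b \<noteq> d" using d1 by auto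
  have aq: "a \<notin> q" "c \<notin> q" using d2 by auto
  have pne: "pos a \<noteq> pos b" "pos c \<noteq> pos d" "pos a \<noteq> pos c"
    using injp V4 ab_ne cd_ne ne by (auto dest: inj_onD)
  obtain \<alpha> where al: "arc \<alpha>" "path_image \<alpha> = path_image (curve {a,b})" "\<alpha> 0 = pos a" "\<alpha> 1 = pos b"
    using orient[OF arcE[OF Eab] _ pne(1)] ends[OF Eab] by auto
  obtain \<gamma> where ga: "arc \<gamma>" "path_image \<gamma> = path_image (curve {c,d})" "\<gamma> 0 = pos c" "\<gamma> 1 = pos d"
    using orient[OF arcE[OF Ecd] _ pne(2)] ends[OF Ecd] by auto
  obtain \<beta> where be: "arc \<beta>" "path_image \<beta> = path_image (curve {a,c})" "\<beta> 0 = pos a" "\<beta> 1 = pos c"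
    using orient[OF arcE[OF Eac] _ pne(3)] ends[OF Eac] by auto
  define \<delta> where "\<delta> = curve q"
  have de: "arc \<delta>" "{\<delta> 0, \<delta> 1} = {pos u, pos v}"
    using arcE[OF Eq] ends[OF Eq] q \<delta>_def by (auto simp: pathstart_def pathfinish_def)
  obtain x where x: "crossings V pos curve {a,b} {c,d} = {x}" using single[OF Eab Ecd cr1] by blast
  obtain y where y: "crossings V pos curve {a,c} q = {y}" using single[OF Eac Eq cr2] by blast
  have xprop: "x \<in> path_image \<alpha>" "x \<in> path_image \<gamma>" "x \<notin> pos ` V"
    using x al ga unfolding crossings_def by auto
  have yprop: "y \<in> path_image \<beta>" "y \<in> path_image \<delta>" "y \<notin> pos ` V"
    using y be \<delta>_def unfolding crossings_def by auto
  have abne: "{a,b} \<noteq> {c,d}" "{a,b} \<noteq> {a,c}" "{c,d} \<noteq> {a,c}" "{a,c} \<noteq> q"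
    using ne ab_ne cd_ne aq by (auto simp: doubleton_eq_iff)
  have pa1: "pos a \<in> path_image \<alpha>" "pos b \<in> path_image \<alpha>"
    using al pathstart_in_path_image pathfinish_in_path_image unfolding pathstart_def pathfinish_def by metis+
  have pg1: "pos c \<in> path_image \<gamma>" "pos d \<in> path_image \<gamma>"
    using ga pathstart_in_path_image pathfinish_in_path_image unfolding pathstart_def pathfinish_def by metis+
  have pb1: "pos a \<in> path_image \<beta>" "pos c \<in> path_image \<beta>"
    using be pathstart_in_path_image pathfinish_in_path_image unfolding pathstart_def pathfinish_def by metis+
  have ag: "path_image \<alpha> \<inter> path_image \<gamma> = {x}"
  proof
    show "{x} \<subseteq> path_image \<alpha> \<inter> path_image \<gamma>" using xprop by auto
    show "path_image \<alpha> \<inter> path_image \<gamma> \<subseteq> {x}"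
    proof
      fix z assume z: "z \<in> path_image \<alpha> \<inter> path_image \<gamma>"
      show "z \<in> {x}"
      proof (cases "z \<in> pos ` V")
        case True
        then have "z \<in> pos ` {a,b}" "z \<in> pos ` {c,d}" using PI[OF Eab] PI[OF Ecd] z al ga by auto
        then have False using injp V4 ne by (auto dest: inj_onD)
        then show ?thesis ..
      next
        case False
        then have "z \<in> crossings V pos curve {a,b} {c,d}" using z al ga unfolding crossings_def by auto
        then show ?thesis using x by auto
      qed
    qed
  qed
  have ab: "path_image \<alpha> \<inter> path_image \<beta> = {\<alpha> 0}"
  proof
    show "{\<alpha> 0} \<subseteq> path_image \<alpha> \<inter> path_image \<beta>" using pa1 pb1 al by auto
    show "path_image \<alpha> \<inter> path_image \<beta> \<subseteq> {\<alpha> 0}"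
    proof
      fix z assume z: "z \<in> path_image \<alpha> \<inter> path_image \<beta>"
      show "z \<in> {\<alpha> 0}"
      proof (cases "z \<in> pos ` V")
        case True
        then have "z \<in> pos ` {a,b}" "z \<in> pos ` {a,c}" using PI[OF Eab] PI[OF Eac] z al be by auto
        then have "z = pos a" using injp V4 ne by (auto dest: inj_onD)
        then show ?thesis using al by auto
      next
        case False
        then have "cross V pos curve {a,b} {a,c}" using CR[OF Eab Eac abne(2)] z al be by auto
        then show ?thesis using disj[OF Eab Eac] by auto
      qed
    qed
  qed
  have gb: "path_image \<gamma> \<inter> path_image \<beta> = {\<gamma> 0}"
  proof
    show "{\<gamma> 0} \<subseteq> path_image \<gamma> \<inter> path_image \<beta>" using pg1 pb1 ga by auto
    show "path_image \<gamma> \<inter> path_image \<beta> \<subseteq> {\<gamma> 0}"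
    proof
      fix z assume z: "z \<in> path_image \<gamma> \<inter> path_image \<beta>"
      show "z \<in> {\<gamma> 0}"
      proof (cases "z \<in> pos ` V")
        case True
        then have "z \<in> pos ` {c,d}" "z \<in> pos ` {a,c}" using PI[OF Ecd] PI[OF Eac] z ga be by auto
        then have "z = pos c" using injp V4 ne cd_ne by (auto dest: inj_onD)
        then show ?thesis using ga by auto
      next
        case False
        then have "cross V pos curve {c,d} {a,c}" using CR[OF Ecd Eac abne(3)] z ga be by auto
        then show ?thesis using disj[OF Ecd Eac] by auto
      qed
    qed
  qed
  obtain s0 where s0: "s0 \<in> {0..1}" "\<alpha> s0 = x" using xprop by (auto simp: path_image_def)
  have s0': "0 < s0" "s0 < 1"
    using s0 xprop al V4 by (auto simp: less_eq_real_def)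
  obtain t0 where t0: "t0 \<in> {0..1}" "\<gamma> t0 = x" using xprop by (auto simp: path_image_def)
  have t0': "0 < t0" "t0 < 1"
    using t0 xprop ga V4 by (auto simp: less_eq_real_def)
  have pc: "proper_crossing_at \<alpha> \<gamma> x"
    using pc_cong[OF al(2)[symmetric] ga(2)[symmetric] PCR[OF Eab Ecd abne(1)]] x by auto
  have pd: "proper_crossing_at \<beta> \<delta> y"
    using pc_cong[OF be(2)[symmetric], of "curve q" \<delta>] PCR[OF Eac Eq abne(4)] y \<delta>_def by auto
  define C where "C = \<alpha> ` {0..s0} \<union> \<gamma> ` {0..t0} \<union> path_image \<beta>"
  have Csub: "C \<subseteq> path_image \<alpha> \<union> path_image \<gamma> \<union> path_image \<beta>"
    using s0' t0' C_def by (auto simp: path_image_def)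
  have Cvert: "z = pos a \<or> z = pos c" if zC: "z \<in> C" and zV: "z \<in> pos ` V" for z
  proof -
    consider "z \<in> \<alpha> ` {0..s0}" | "z \<in> \<gamma> ` {0..t0}" | "z \<in> path_image \<beta>" using zC C_def by blast
    then show ?thesis
    proof cases
      case 1
      then obtain t where t: "t \<in> {0..s0}" "z = \<alpha> t" by auto
      then have "z \<in> path_image \<alpha>" using s0' by (auto simp: path_image_def)
      then have "z \<in> pos ` {a,b}" using PI[OF Eab] al zV by auto
      moreover have "z \<noteq> pos b"
      proof
        assume "z = pos b" then have "\<alpha> t = \<alpha> 1" using t al by simp
        then show False using arc_inj[OF al(1), of t 1] t s0' by auto
      qed
      ultimately show ?thesis by auto
    next
      case 2
      then obtain t where t: "t \<in> {0..t0}" "z = \<gamma> t" by auto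
      then have "z \<in> path_image \<gamma>" using t0' by (auto simp: path_image_def)
      then have "z \<in> pos ` {c,d}" using PI[OF Ecd] ga zV by auto
      moreover have "z \<noteq> pos d"
      proof
        assume "z = pos d" then have "\<gamma> t = \<gamma> 1" using t ga by simp
        then show False using arc_inj[OF ga(1), of t 1] t t0' by auto
      qed
      ultimately show ?thesis by auto
    next
      case 3
      then show ?thesis using PI[OF Eac] be zV 3 by auto
    qed
  qed
  have Cedge: "z \<notin> C" if e: "e \<in> E" "a \<notin> e" "c \<notin> e" "e \<noteq> q" and z: "z \<in> path_image (curve e)" for e z
  proof
    assume zC: "z \<in> C"
    show False
    proof (cases "z \<in> pos ` V")
      case True
      then have "z \<in> pos ` e" using PI[OF e(1) z] by auto
      moreover have "z = pos a \<or> z = pos c" using Cvert zC True by auto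
      ultimately show False using injp eV[OF e(1)] V4 e by (auto dest: inj_onD)
    next
      case False
      consider "z \<in> path_image \<alpha>" | "z \<in> path_image \<gamma>" | "z \<in> path_image \<beta>" using zC Csub by blast
      then show False
      proof cases
        case 1
        have "e \<noteq> {a,b}" using e by auto
        then have "cross V pos curve e {a,b}" using CR[OF e(1) Eab] z 1 al False by auto
        then have "cross V pos curve {a,b} e" using cross_sym by metis
        then have "e = {c,d}" using uniq[OF Eab e(1) Ecd] cr1 by auto
        then show False using e by auto
      next
        case 2
        have "e \<noteq> {c,d}" using e by auto
        then have "cross V pos curve e {c,d}" using CR[OF e(1) Ecd] z 2 ga False by auto
        then have "cross V pos curve {c,d} e" using cross_sym by metis
        moreover have "cross V pos curve {c,d} {a,b}" using cr1 cross_sym by metis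
        ultimately have "e = {a,b}" using uniq[OF Ecd e(1) Eab] by auto
        then show False using e by auto
      next
        case 3
        have "e \<noteq> {a,c}" using e by auto
        then have "cross V pos curve e {a,c}" using CR[OF e(1) Eac] z 3 be False by auto
        then have "cross V pos curve {a,c} e" using cross_sym by metis
        then have "e = q" using uniq[OF Eac e(1) Eq] cr2 by auto
        then show False using e by auto
      qed
    qed
  qed
  have dC: "path_image \<delta> \<inter> C = {y}"
  proof
    show "{y} \<subseteq> path_image \<delta> \<inter> C" using yprop C_def by auto
    show "path_image \<delta> \<inter> C \<subseteq> {y}"
    proof
      fix z assume z: "z \<in> path_image \<delta> \<inter> C"
      show "z \<in> {y}"
      proof (cases "z \<in> pos ` V")
        case True
        then have "z \<in> pos ` q" using PI[OF Eq] z \<delta>_def by auto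
        moreover have "z = pos a \<or> z = pos c" using Cvert z True by auto
        ultimately have False using injp eV[OF Eq] V4 aq by (auto dest: inj_onD)
        then show ?thesis ..
      next
        case False
        consider "z \<in> path_image \<alpha>" | "z \<in> path_image \<gamma>" | "z \<in> path_image \<beta>" using z Csub by blast
        then show ?thesis
        proof cases
          case 1
          have "q \<noteq> {a,b}" using aq by auto
          then have "cross V pos curve q {a,b}" using CR[OF Eq Eab] z 1 al False \<delta>_def by auto
          then have "cross V pos curve {a,b} q" using cross_sym by metis
          then have "q = {c,d}" using uniq[OF Eab Eq Ecd] cr1 by auto
          then show ?thesis using aq by auto
        next
          case 2
          have "q \<noteq> {c,d}" using aq by auto
          then have "cross V pos curve q {c,d}" using CR[OF Eq Ecd] z 2 ga False \<delta>_def by auto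
          then have "cross V pos curve {c,d} q" using cross_sym by metis
          moreover have "cross V pos curve {c,d} {a,b}" using cr1 cross_sym by metis
          ultimately have "q = {a,b}" using uniq[OF Ecd Eq Eab] by auto
          then show ?thesis using aq by auto
        next
          case 3
          then have "z \<in> crossings V pos curve {a,c} q"
            using z False be \<delta>_def unfolding crossings_def by auto
          then show ?thesis using y by auto
        qed
      qed
    qed
  qed
  have uvV: "pos u \<in> pos ` V" "pos v \<in> pos ` V" using q by auto
  have yb: "y \<noteq> \<beta> 0" "y \<noteq> \<beta> 1" using yprop be V4 by auto
  have yd: "y \<noteq> \<delta> 0" "y \<noteq> \<delta> 1" using yprop de uvV by (auto simp: doubleton_eq_iff)
  have same: "connected_component (- C) (pos b) (pos d)"
    using core_same[OF al(1) ga(1) be(1) s0'(1,2) t0'(1,2) s0(2) t0(2) ag ab gb pc] al ga C_def by simp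
  have bs: "\<beta> 0 = \<alpha> 0" "\<beta> 1 = \<gamma> 0" using be al ga by simp_all
  have dC': "path_image \<delta> \<inter> (\<alpha> ` {0..s0} \<union> \<gamma> ` {0..t0} \<union> path_image \<beta>) = {y}"
    using dC C_def by simp
  have sep: "\<not> connected_component (- C) (\<delta> 0) (\<delta> 1)"
    using core_sep[OF al(1) ga(1) be(1) de(1) s0'(1,2) t0'(1,2) s0(2) t0(2) ag ab gb bs pd dC' yprop(1) yb yd]
      C_def by simp
  have "(\<delta> 0 = pos u \<and> \<delta> 1 = pos v) \<or> (\<delta> 0 = pos v \<and> \<delta> 1 = pos u)"
    using de(2) by (simp add: doubleton_eq_iff)
  then have sepuv: "\<not> connected_component (- C) (pos u) (pos v)"
  proof
    assume "\<delta> 0 = pos u \<and> \<delta> 1 = pos v" then show ?thesis using sep by simp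
  next
    assume h: "\<delta> 0 = pos v \<and> \<delta> 1 = pos u"
    show ?thesis
    proof
      assume "connected_component (- C) (pos u) (pos v)"
      then have "connected_component (- C) (pos v) (pos u)" by (rule connected_component_sym)
      then show False using sep h by simp
    qed
  qed
  obtain w w' where ww: "q = {w, w'}" "w \<noteq> w'" "\<not> connected_component (- C) (pos b) (pos w)"
  proof (cases "connected_component (- C) (pos b) (pos u)")
    case True
    have "\<not> connected_component (- C) (pos b) (pos v)"
    proof
      assume "connected_component (- C) (pos b) (pos v)"
      then have "connected_component (- C) (pos u) (pos v)"
        using connected_component_trans[OF connected_component_sym[OF True]] by blast
      then show False using sepuv by blast
    qed
    then show ?thesis using that[of v u] q by (auto simp: insert_commute)
  next
    case False
    then show ?thesis using that[of u v] q by auto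
  qed
  have ndw: "\<not> connected_component (- C) (pos d) (pos w)"
  proof
    assume "connected_component (- C) (pos d) (pos w)"
    then have "connected_component (- C) (pos b) (pos w)"
      using connected_component_trans[OF same] by blast
    then show False using ww(3) by blast
  qed
  obtain z where z: "z \<in> {b,d}" "z \<noteq> w'"
  proof (cases "b = w'")
    case True then show ?thesis using that[of d] ne by auto
  next
    case False then show ?thesis using that[of b] by auto
  qed
  have nzw: "\<not> connected_component (- C) (pos z) (pos w)" using z ww(3) ndw by auto
  define S where "S = {a, c, w'}"
  have SV: "S \<subseteq> V" using S_def V4 q ww by auto
  have cS: "card S < 4"
  proof -
    have "card S \<le> 3" unfolding S_def by (auto simp: card_insert_if)
    then show ?thesis by simp
  qed
  have "connected_on (V - S) E" using kc SV cS unfolding k_connected_def by blast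
  moreover have zS: "z \<in> V - S"
  proof -
    have zV: "z \<in> V" using z(1) V4 by blast
    have "z \<noteq> a" "z \<noteq> c" using z(1) ne ab_ne cd_ne by auto
    then show ?thesis using zV z(2) S_def by simp
  qed
  moreover have wS: "w \<in> V - S"
  proof -
    have wq: "w \<in> q" using ww(1) by blast
    then have "w \<in> V" using eV[OF Eq] by blast
    moreover have "w \<noteq> a" "w \<noteq> c" using wq aq by auto
    ultimately show ?thesis using ww(2) S_def by simp
  qed
  ultimately have rt: "(z, w) \<in> {(x, y). x \<in> V - S \<and> y \<in> V - S \<and> {x, y} \<in> E}\<^sup>*"
    unfolding connected_on_def by (elim ballE) auto
  have "connected_component (- C) (pos z) (pos w)"
    using rt
  proof (induction rule: rtrancl_induct)
    case base
    have "pos z \<notin> C"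
    proof
      assume "pos z \<in> C"
      then have "pos z = pos a \<or> pos z = pos c" using Cvert zS by auto
      then have "z = a \<or> z = c" using inj_onD[OF injp, of z a] inj_onD[OF injp, of z c] zS V4 by blast
      then show False using zS S_def by blast
    qed
    then show ?case by (simp add: connected_component_refl)
  next
    case (step t t')
    then have tt: "t \<in> V - S" "t' \<in> V - S" "{t, t'} \<in> E" by auto
    have "a \<notin> {t,t'}" "c \<notin> {t,t'}" "w' \<notin> {t,t'}" using tt S_def by auto
    moreover have "w' \<in> q" using ww(1) by blast
    ultimately have "a \<notin> {t,t'}" "c \<notin> {t,t'}" "{t,t'} \<noteq> q" by blast+
    then have "path_image (curve {t,t'}) \<subseteq> - C" using Cedge[OF tt(3)] by blast
    moreover have "connected (path_image (curve {t,t'}))"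
      using arcE[OF tt(3)] by (simp add: arc_imp_path connected_path_image)
    moreover have "pos t \<in> path_image (curve {t,t'})" "pos t' \<in> path_image (curve {t,t'})"
    proof -
      have "pos t \<in> {pathstart (curve {t,t'}), pathfinish (curve {t,t'})}"
        "pos t' \<in> {pathstart (curve {t,t'}), pathfinish (curve {t,t'})}"
        using ends[OF tt(3)] by auto
      then show "pos t \<in> path_image (curve {t,t'})" "pos t' \<in> path_image (curve {t,t'})"
        using pathstart_in_path_image[of "curve {t,t'}"] pathfinish_in_path_image[of "curve {t,t'}"] by auto
    qed
    ultimately have "connected_component (- C) (pos t) (pos t')"
      by (intro connected_componentI[of "path_image (curve {t,t'})"]) auto
    then show ?case using connected_component_trans[OF step.IH] by blast
  qed
  then show False using nzw by simp
qed

lemma main2: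
  fixes V :: "'a set" and E :: "'a set set"
    and pos :: "'a \<Rightarrow> complex" and curve :: "'a set \<Rightarrow> real \<Rightarrow> complex"
  assumes sg: "simple_graph V E" and op: "one_planar_drawing V E pos curve"
    and kc: "k_connected 4 V E"
    and e: "e \<in> E" and f: "f \<in> E" and ef: "cross V pos curve e f"
    and p: "p \<in> e" and p': "p' \<in> f" and g: "{p, p'} \<in> E" and h: "h \<in> E"
    and gh: "cross V pos curve {p, p'} h"
  shows False
proof -
  have edge: "\<exists>u v. e = {u, v} \<and> u \<in> V \<and> v \<in> V \<and> u \<noteq> v" if "e \<in> E" for e
    using sg that unfolding simple_graph_def by blast
  have oth: "\<exists>b. x = {a, b}" if xE: "x \<in> E" and ax: "a \<in> x" for x a
  proof -
    obtain u v where "x = {u, v}" using edge[OF xE] by blast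
    then show ?thesis using ax by (auto simp: insert_commute)
  qed
  obtain b where eb: "e = {p, b}" using oth[OF e p] by blast
  obtain d where fd: "f = {p', d}" using oth[OF f p'] by blast
  show False
    using main[OF sg op kc, of p b p' d h] e f g h ef gh eb fd by simp
qed

theorem lemma4:
  fixes V :: "'a set" and E :: "'a set set"
    and pos :: "'a \<Rightarrow> complex" and curve :: "'a set \<Rightarrow> real \<Rightarrow> complex"
  assumes "simple_graph V E"
    and "one_planar_drawing V E pos curve"
    and "k_connected 4 V E"
  shows "nice_drawing V E pos curve"
  unfolding nice_drawing_def
proof (intro conjI ballI impI allI notI)
  show "one_planar_drawing V E pos curve" by (rule assms(2))
next
  fix e f g h
  assume e: "e \<in> E" and f: "f \<in> E" and ef: "cross V pos curve e f" and g: "g \<in> E"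
    and gef: "g \<subseteq> e \<union> f \<and> g \<noteq> e \<and> g \<noteq> f" and h: "h \<in> E" and gh: "cross V pos curve g h"
  have edge: "\<exists>u v. x = {u, v} \<and> u \<in> V \<and> v \<in> V \<and> u \<noteq> v" if "x \<in> E" for x
    using assms(1) that unfolding simple_graph_def by blast
  obtain a b where ab: "e = {a, b}" "a \<noteq> b" using edge[OF e] by blast
  obtain c d where cd: "f = {c, d}" "c \<noteq> d" using edge[OF f] by blast
  obtain p p' where pp: "g = {p, p'}" "p \<noteq> p'" using edge[OF g] by blast
  have fe: "cross V pos curve f e" using ef cross_sym by metis
  have "(p \<in> e \<and> p' \<in> f) \<or> (p' \<in> e \<and> p \<in> f)"
  proof (rule ccontr)
    assume n: "\<not> ((p \<in> e \<and> p' \<in> f) \<or> (p' \<in> e \<and> p \<in> f))"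
    have "p \<in> e \<union> f" "p' \<in> e \<union> f" using gef pp by auto
    then have "(p \<in> e \<and> p' \<in> e) \<or> (p \<in> f \<and> p' \<in> f)" using n by blast
    then show False
    proof
      assume "p \<in> e \<and> p' \<in> e"
      then have "g = e" using pp ab by auto
      then show False using gef by blast
    next
      assume "p \<in> f \<and> p' \<in> f"
      then have "g = f" using pp cd by auto
      then show False using gef by blast
    qed
  qed
  then show False
  proof
    assume "p \<in> e \<and> p' \<in> f"
    then show False using main2[OF assms e f ef _ _ _ h, of p p'] pp g gh by blast
  next
    assume "p' \<in> e \<and> p \<in> f"
    moreover have "g = {p', p}" using pp by (simp add: insert_commute)
    ultimately show False using main2[OF assms e f ef _ _ _ h, of p' p] g gh by blast
  qed
qed

end
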